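(* Let $\Omega\subset\mathbb{R}^n$ be a domain with $\mathrm{width}(\Omega)<+\infty$, let $f\in L^\infty(\Omega)$ and $g\in C(\partial\Omega)\cap L^\infty(\partial\Omega)$, and let $(\varepsilon_i)_{i\ge1}$ be a sequence of positive numbers with $\varepsilon_i\to 0$. For each $i$ let $u_i:\overline{\Omega}\to\mathbb{R}$ be a bounded solution of \[ \begin{cases}\Delta_\infty^{\varepsilon_i}u_i(x)=\varepsilon_i^2 f(x), & x\in\Omega,\\ u_i(x)=g(x), & x\in\partial\Omega.\end{cases} \] Then there exists a subsequence of $(u_i)$ converging locally uniformly to some $u\in C(\overline{\Omega})$.
   Context: A domain is an open connected subset of $\mathbb{R}^n$; $\overline\Omega$ is its closure and $\partial\Omega$ its boundary. $d(x,y)$ denotes the intrinsic metric of $\overline\Omega$: the infimum of the lengths of paths in $\overline\Omega$ from $x$ to $y$. $\mathrm{width}(\Omega)=\sup_{x\in\Omega} d(\partial\Omega,x)$, where $d(\partial\Omega,x)=\inf_{y\in\partial\Omega}d(y,x)$. For $\varepsilon>0$, $B_x(\varepsilon)=\{y\in\overline\Omega: d(x,y)<\varepsilon\}$ and for $w:\overline\Omega\to\mathbb{R}$, $\Delta^{\varepsilon}_\infty w(x)=\inf_{y\in B_x(\varepsilon)}w(y)+\sup_{y\in B_x(\varepsilon)}w(y)-2w(x)$. *)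

theory Defs
  imports "HOL-Analysis.Analysis"
begin

definition path_len :: "(real \<Rightarrow> 'a::metric_space) \<Rightarrow> ereal" where
  "path_len \<gamma> = (SUP p \<in> {(m::nat, t::nat \<Rightarrow> real). t 0 = 0 \<and> t m = 1 \<and>
        (\<forall>i<m. t i \<le> t (Suc i))}.
      ereal (\<Sum>i<fst p. dist (\<gamma> (snd p (Suc i))) (\<gamma> (snd p i))))"

text \<open>Intrinsic metric of the closure of \<Omega> (value \<infinity> if no rectifiable path exists).\<close>
definition intr_dist :: "'a::real_normed_vector set \<Rightarrow> 'a \<Rightarrow> 'a \<Rightarrow> ereal" where
  "intr_dist \<Omega> x y = (INF \<gamma> \<in> {\<gamma>. path \<gamma> \<and> path_image \<gamma> \<subseteq> closure \<Omega> \<and>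
        pathstart \<gamma> = x \<and> pathfinish \<gamma> = y}. path_len \<gamma>)"

definition width :: "'a::real_normed_vector set \<Rightarrow> ereal" where
  "width \<Omega> = (SUP x \<in> \<Omega>. INF y \<in> frontier \<Omega>. intr_dist \<Omega> y x)"

definition intr_ball :: "'a::real_normed_vector set \<Rightarrow> 'a \<Rightarrow> real \<Rightarrow> 'a set" where
  "intr_ball \<Omega> x \<epsilon> = {y \<in> closure \<Omega>. intr_dist \<Omega> x y < ereal \<epsilon>}"

definition eps_inf_lap :: "'a::real_normed_vector set \<Rightarrow> real \<Rightarrow> ('a \<Rightarrow> real) \<Rightarrow> 'a \<Rightarrow> real" where
  "eps_inf_lap \<Omega> \<epsilon> w x =
     (INF y \<in> intr_ball \<Omega> x \<epsilon>. w y) + (SUP y \<in> intr_ball \<Omega> x \<epsilon>. w y) - 2 * w x"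

end

theory Submission
  imports Defs "HOL-Library.Diagonal_Subsequence"
begin


lemma path_len_ge:
  fixes \<gamma> :: "real \<Rightarrow> 'a::metric_space"
  shows "ereal (dist (\<gamma> 1) (\<gamma> 0)) \<le> path_len \<gamma>"
proof -
  let ?t = "\<lambda>i::nat. if i = 0 then 0 else (1::real)"
  have "(1::nat, ?t) \<in> {(m::nat, t::nat \<Rightarrow> real). t 0 = 0 \<and> t m = 1 \<and> (\<forall>i<m. t i \<le> t (Suc i))}"
    by auto
  then have "ereal (\<Sum>i<fst (1::nat, ?t). dist (\<gamma> (snd (1::nat, ?t) (Suc i))) (\<gamma> (snd (1::nat,?t) i))) \<le> path_len \<gamma>"
    unfolding path_len_def by (rule SUP_upper)
  then show ?thesis by simp
qed

lemma intr_dist_ge: "ereal (dist x y) \<le> intr_dist \<Omega> x y"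
  unfolding intr_dist_def
proof (rule INF_greatest)
  fix \<gamma> assume "\<gamma> \<in> {\<gamma>. path \<gamma> \<and> path_image \<gamma> \<subseteq> closure \<Omega> \<and> pathstart \<gamma> = x \<and> pathfinish \<gamma> = y}"
  then have "\<gamma> 0 = x" "\<gamma> 1 = y" by (auto simp: pathstart_def pathfinish_def)
  then show "ereal (dist x y) \<le> path_len \<gamma>"
    using path_len_ge[of \<gamma>] by (simp add: dist_commute)
qed

lemma sum_telescope_real:
  fixes t :: "nat \<Rightarrow> real"
  shows "(\<Sum>i<m. (t (Suc i) - t i)) = t m - t 0"
  by (induction m) auto

lemma path_len_linepath:
  fixes a b :: "'a::real_normed_vector"
  shows "path_len (linepath a b) \<le> ereal (dist a b)"
  unfolding path_len_def
proof (rule SUP_least)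
  fix p assume "p \<in> {(m::nat, t::nat \<Rightarrow> real). t 0 = 0 \<and> t m = 1 \<and> (\<forall>i<m. t i \<le> t (Suc i))}"
  then obtain m t where p: "p = (m, t)" "t 0 = 0" "t m = 1" "\<forall>i<m. t i \<le> t (Suc i)" by auto
  have "\<And>i. i < m \<Longrightarrow> dist (linepath a b (t (Suc i))) (linepath a b (t i)) = (t (Suc i) - t i) * dist a b"
  proof -
    fix i assume "i < m"
    then have le: "t i \<le> t (Suc i)" using p by auto
    have "linepath a b (t (Suc i)) - linepath a b (t i) = (t (Suc i) - t i) *\<^sub>R (b - a)"
      by (simp add: linepath_def algebra_simps)
    then show "dist (linepath a b (t (Suc i))) (linepath a b (t i)) = (t (Suc i) - t i) * dist a b"
      using le by (simp add: dist_norm norm_minus_commute)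
  qed
  then have "(\<Sum>i<m. dist (linepath a b (t (Suc i))) (linepath a b (t i))) = (\<Sum>i<m. (t (Suc i) - t i)) * dist a b"
    by (simp add: sum_distrib_right)
  also have "\<dots> = dist a b" using p by (simp add: sum_telescope_real)
  finally show "ereal (\<Sum>i<fst p. dist (linepath a b (snd p (Suc i))) (linepath a b (snd p i))) \<le> ereal (dist a b)"
    using p by simp
qed

lemma intr_dist_seg:
  assumes "closed_segment a b \<subseteq> closure \<Omega>"
  shows "intr_dist \<Omega> a b \<le> ereal (dist a b)"
proof -
  have "linepath a b \<in> {\<gamma>. path \<gamma> \<and> path_image \<gamma> \<subseteq> closure \<Omega> \<and> pathstart \<gamma> = a \<and> pathfinish \<gamma> = b}"
    using assms by auto
  then have "intr_dist \<Omega> a b \<le> path_len (linepath a b)"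
    unfolding intr_dist_def by (rule INF_lower)
  then show ?thesis using path_len_linepath order_trans by blast
qed

lemma intr_ball_sub:
  assumes "y \<in> intr_ball \<Omega> x e"
  shows "y \<in> closure \<Omega>" "dist x y < e"
proof -
  show "y \<in> closure \<Omega>" using assms by (simp add: intr_ball_def)
  have "intr_dist \<Omega> x y < ereal e" using assms by (simp add: intr_ball_def)
  then have "ereal (dist x y) < ereal e"
    by (rule le_less_trans[OF intr_dist_ge])
  then show "dist x y < e" by simp
qed

lemma intr_ball_seg:
  assumes "closed_segment x y \<subseteq> closure \<Omega>" "dist x y < e"
  shows "y \<in> intr_ball \<Omega> x e"
proof -
  have "y \<in> closure \<Omega>" using assms(1) by auto
  moreover have "intr_dist \<Omega> x y < ereal e"
    using le_less_trans[OF intr_dist_seg[OF assms(1)]] assms(2) by simp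
  ultimately show ?thesis by (simp add: intr_ball_def)
qed

lemma intr_ball_ball:
  fixes \<Omega> :: "'a::real_normed_vector set"
  assumes "ball y e \<subseteq> \<Omega>" "y' \<in> ball y e"
  shows "y' \<in> intr_ball \<Omega> y e"
proof (rule intr_ball_seg)
  have "closed_segment y y' \<subseteq> ball y e"
  proof (rule closed_segment_subset)
    show "y \<in> ball y e" using assms(2) by (simp add: order_le_less_trans[OF zero_le_dist])
  qed (use assms(2) in auto)
  then show "closed_segment y y' \<subseteq> closure \<Omega>" using assms(1) closure_subset by blast
  show "dist y y' < e" using assms(2) by simp
qed

lemma ball_frontier_free:
  fixes \<Omega> :: "'a::real_normed_vector set"
  assumes "y \<in> \<Omega>" "ball y r \<inter> frontier \<Omega> = {}"
  shows "ball y r \<subseteq> \<Omega>"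
proof (rule ccontr)
  assume "\<not> ball y r \<subseteq> \<Omega>"
  then have "ball y r - \<Omega> \<noteq> {}" by blast
  moreover have "ball y r \<inter> \<Omega> \<noteq> {}"
  proof -
    have "r > 0" using \<open>\<not> ball y r \<subseteq> \<Omega>\<close> by (metis ball_eq_empty empty_subsetI not_less)
    then show ?thesis using assms(1) by (metis IntI centre_in_ball empty_iff)
  qed
  ultimately have "ball y r \<inter> frontier \<Omega> \<noteq> {}"
    using connected_Int_frontier[of "ball y r" \<Omega>] by auto
  then show False using assms(2) by simp
qed

lemma bdry_near:
  fixes \<Omega> :: "'a::euclidean_space set"
  assumes op: "open \<Omega>" and y: "y \<in> \<Omega>" and nb: "\<not> ball y e \<subseteq> \<Omega>"
  shows "\<exists>q\<in>frontier \<Omega>. q \<in> intr_ball \<Omega> y e"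
proof -
  have ne: "ball y e \<inter> frontier \<Omega> \<noteq> {}" using ball_frontier_free[OF y] nb by blast
  then have fne: "frontier \<Omega> \<noteq> {}" by blast
  obtain q where q: "q \<in> frontier \<Omega>" "infdist y (frontier \<Omega>) = dist y q"
    using infdist_attains_inf[OF frontier_closed fne] by blast
  from ne obtain q' where q': "q' \<in> frontier \<Omega>" "dist y q' < e" by auto
  have lt: "dist y q < e" using q q' infdist_le[of q' "frontier \<Omega>" y] by linarith
  have bq: "ball y (dist y q) \<subseteq> \<Omega>"
  proof (rule ball_frontier_free[OF y])
    show "ball y (dist y q) \<inter> frontier \<Omega> = {}"
      using q infdist_le[of _ "frontier \<Omega>" y] by (force simp: mem_ball)
  qed
  have qc: "q \<in> closure \<Omega>" using q(1) frontier_def by (metis DiffD1)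
  have "closed_segment y q \<subseteq> closure \<Omega>"
  proof
    fix w assume w: "w \<in> closed_segment y q"
    show "w \<in> closure \<Omega>"
    proof (cases "w = q")
      case True then show ?thesis using qc by simp
    next
      case False
      show ?thesis
      proof (cases "w = y")
        case True then show ?thesis using y closure_subset by blast
      next
        case False
        then have "w \<in> open_segment y q" using w \<open>w \<noteq> q\<close> by (simp add: open_segment_def)
        then have "dist y w < dist y q"
          using dist_in_open_segment[of w y q] by (simp add: dist_commute)
        then have "w \<in> \<Omega>" using bq by (auto simp: mem_ball)
        then show ?thesis using closure_subset by blast
      qed
    qed
  qed
  then have "q \<in> intr_ball \<Omega> y e" using lt by (rule intr_ball_seg)
  then show ?thesis using q by blast
qed

lemma step_toward:
  fixes y q :: "'a::real_normed_vector"
  assumes e: "e > 0" "\<eta> > 0" "dist y q \<ge> e"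
  shows "\<exists>y'\<in>ball y e. dist y' q \<le> dist y q - e + \<eta>"
proof -
  define s where "s = dist y q"
  define \<rho> where "\<rho> = e - min \<eta> e / 2"
  have s: "s \<ge> e" "s > 0" using e by (auto simp: s_def)
  have \<rho>: "0 < \<rho>" "\<rho> < e" "\<rho> \<ge> e - \<eta>" using e by (auto simp: \<rho>_def)
  define y' where "y' = y + (\<rho> / s) *\<^sub>R (q - y)"
  have n: "norm (q - y) = s" by (simp add: s_def dist_norm norm_minus_commute)
  have d1: "dist y y' = \<rho>"
    using s \<rho> by (simp add: y'_def dist_norm n)
  have "q - y' = (1 - \<rho> / s) *\<^sub>R (q - y)" by (simp add: y'_def algebra_simps)
  then have "dist y' q = (1 - \<rho>/s) * s"
    using s \<rho> by (simp add: dist_norm norm_minus_commute[of y' q] n)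
  moreover have "(1 - \<rho>/s) * s = s - \<rho>" using s by (simp add: field_simps)
  ultimately have "dist y' q = s - \<rho>" by simp
  then show ?thesis using \<rho> d1 by (intro bexI[of _ y']) (auto simp: s_def)
qed



definition OS :: "'a::real_normed_vector set \<Rightarrow> real \<Rightarrow> real \<Rightarrow> ('a \<Rightarrow> real) \<Rightarrow> bool" where
  "OS \<Omega> e F v \<longleftrightarrow> (\<forall>x\<in>\<Omega>. \<forall>w\<in>intr_ball \<Omega> x e. \<forall>P. (\<forall>z\<in>intr_ball \<Omega> x e. v z \<le> P)
      \<longrightarrow> 2 * v x \<le> v w + P + e\<^sup>2 * F)"

lemma center_in_intr_ball:
  assumes "x \<in> \<Omega>" "e > 0"
  shows "x \<in> intr_ball \<Omega> x e"
  using assms closure_subset by (intro intr_ball_seg) auto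

lemma dpp_OS:
  fixes \<Omega> :: "'a::real_normed_vector set"
  assumes e: "e > 0" and ub: "bounded (u ` closure \<Omega>)"
    and eq: "\<forall>x\<in>\<Omega>. eps_inf_lap \<Omega> e u x = e\<^sup>2 * f x"
    and fb: "\<forall>x\<in>\<Omega>. \<bar>f x\<bar> \<le> F"
  shows "OS \<Omega> e F u" "OS \<Omega> e F (\<lambda>z. - u z)"
proof -
  have key: "(INF y\<in>intr_ball \<Omega> x e. u y) \<le> u w \<and> u w \<le> (SUP y\<in>intr_ball \<Omega> x e. u y) \<and>
     ((\<forall>z\<in>intr_ball \<Omega> x e. u z \<le> P) \<longrightarrow> (SUP y\<in>intr_ball \<Omega> x e. u y) \<le> P) \<and>
     ((\<forall>z\<in>intr_ball \<Omega> x e. - u z \<le> P) \<longrightarrow> - P \<le> (INF y\<in>intr_ball \<Omega> x e. u y)) \<and>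
     2 * u x = (INF y\<in>intr_ball \<Omega> x e. u y) + (SUP y\<in>intr_ball \<Omega> x e. u y) - e\<^sup>2 * f x \<and>
     - (e\<^sup>2 * F) \<le> e\<^sup>2 * f x \<and> e\<^sup>2 * f x \<le> e\<^sup>2 * F"
    if x: "x \<in> \<Omega>" and w: "w \<in> intr_ball \<Omega> x e" for x w P
  proof -
    let ?B = "intr_ball \<Omega> x e"
    have sub: "?B \<subseteq> closure \<Omega>" using intr_ball_sub(1) by blast
    have ne: "?B \<noteq> {}" using w by blast
    have bd: "bounded (u ` ?B)" using bounded_subset[OF ub] sub by blast
    have ba: "bdd_above (u ` ?B)" using bounded_imp_bdd_above[OF bd] .
    have bb: "bdd_below (u ` ?B)" using bounded_imp_bdd_below[OF bd] .
    have fx: "\<bar>f x\<bar> \<le> F" using fb x by blast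
    have e2: "e\<^sup>2 \<ge> 0" by simp
    have f1: "- F \<le> f x" and f2: "f x \<le> F" using fx by auto
    have "e\<^sup>2 * (- F) \<le> e\<^sup>2 * f x" "e\<^sup>2 * f x \<le> e\<^sup>2 * F"
      using mult_left_mono[OF f1 e2] mult_left_mono[OF f2 e2] by auto
    then have "- (e\<^sup>2 * F) \<le> e\<^sup>2 * f x" "e\<^sup>2 * f x \<le> e\<^sup>2 * F" by (simp_all del: power2_eq_square)
    moreover have "2 * u x = (INF y\<in>?B. u y) + (SUP y\<in>?B. u y) - e\<^sup>2 * f x"
    proof -
      have "eps_inf_lap \<Omega> e u x = e\<^sup>2 * f x" using eq x by blast
      then show ?thesis unfolding eps_inf_lap_def by linarith
    qed
    moreover have "(INF y\<in>?B. u y) \<le> u w" using cINF_lower[OF bb w] .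
    moreover have "u w \<le> (SUP y\<in>?B. u y)" using cSUP_upper[OF w ba] .
    moreover have "(\<forall>z\<in>?B. u z \<le> P) \<longrightarrow> (SUP y\<in>?B. u y) \<le> P"
      using cSUP_least[OF ne] by blast
    moreover have "(\<forall>z\<in>?B. - u z \<le> P) \<longrightarrow> - P \<le> (INF y\<in>?B. u y)"
      using cINF_greatest[OF ne, of "- P" u] by force
    ultimately show ?thesis by blast
  qed
  show "OS \<Omega> e F u" unfolding OS_def
  proof (intro ballI allI impI)
    fix x w P assume x: "x \<in> \<Omega>" and w: "w \<in> intr_ball \<Omega> x e" and P: "\<forall>z\<in>intr_ball \<Omega> x e. u z \<le> P"
    from key[OF x w, of P] P show "2 * u x \<le> u w + P + e\<^sup>2 * F" by linarith
  qed
  show "OS \<Omega> e F (\<lambda>z. - u z)" unfolding OS_def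
  proof (intro ballI allI impI)
    fix x w P assume x: "x \<in> \<Omega>" and w: "w \<in> intr_ball \<Omega> x e" and P: "\<forall>z\<in>intr_ball \<Omega> x e. - u z \<le> P"
    from key[OF x w, of P] P show "2 * - u x \<le> - u w + P + e\<^sup>2 * F" by linarith
  qed
qed

definition psi :: "real \<Rightarrow> real \<Rightarrow> real \<Rightarrow> real" where
  "psi lam K s = lam * (K\<^sup>2 - (K - min s K)\<^sup>2)"

lemma psi_nonneg: "0 \<le> lam \<Longrightarrow> 0 \<le> K \<Longrightarrow> 0 \<le> s \<Longrightarrow> 0 \<le> psi lam K s"
proof -
  assume a: "0 \<le> lam" "0 \<le> K" "0 \<le> s"
  have "(K - min s K)\<^sup>2 \<le> K\<^sup>2" using a by (intro power_mono) auto
  then show ?thesis unfolding psi_def using a by simp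
qed

lemma psi_zero: "psi lam K 0 = 0" if "0 \<le> K" using that by (simp add: psi_def)

lemma psi_mono: assumes "0 \<le> lam" "s \<le> t" shows "psi lam K s \<le> psi lam K t"
proof -
  have "(K - min t K)\<^sup>2 \<le> (K - min s K)\<^sup>2"
    using assms by (intro power_mono) auto
  then show ?thesis unfolding psi_def using assms by (intro mult_left_mono) auto
qed

lemma psi_le_top: "0 \<le> lam \<Longrightarrow> psi lam K s \<le> lam * K\<^sup>2"
  unfolding psi_def by (intro mult_left_mono) auto

lemma psi_lip:
  assumes "0 \<le> lam" "0 \<le> K" "0 \<le> s" "0 \<le> d"
  shows "psi lam K (s + d) - psi lam K s \<le> 2 * lam * K * d"
proof -
  define a where "a = min s K"
  define b where "b = min (s + d) K"
  have ab: "0 \<le> a" "a \<le> b" "b - a \<le> d" "b \<le> K" using assms by (auto simp: a_def b_def)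
  have eq: "psi lam K (s + d) - psi lam K s = lam * ((b - a) * (2 * K - a - b))"
    unfolding psi_def a_def[symmetric] b_def[symmetric] by (simp add: power2_eq_square algebra_simps)
  have "(b - a) * (2 * K - a - b) \<le> d * (2 * K)"
    using ab assms by (intro mult_mono; auto)
  then have "lam * ((b - a) * (2 * K - a - b)) \<le> lam * (d * (2 * K))"
    using assms(1) by (rule mult_left_mono)
  then show ?thesis unfolding eq by (simp add: algebra_simps)
qed

lemma psi_le_lin:
  assumes "0 \<le> lam" "0 \<le> K" "0 \<le> s"
  shows "psi lam K s \<le> 2 * lam * K * s"
  using psi_lip[OF assms(1,2) order_refl assms(3)] psi_zero[OF assms(2)] by simp

lemma psi_ge:
  assumes "0 \<le> lam" "0 \<le> K" "0 \<le> s"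
  shows "lam * K * min s K \<le> psi lam K s"
proof -
  define a where "a = min s K"
  have a: "0 \<le> a" "a \<le> K" using assms by (auto simp: a_def)
  have "K\<^sup>2 - (K - a)\<^sup>2 = a * (2 * K - a)" by (simp add: power2_eq_square algebra_simps)
  moreover have "a * K \<le> a * (2 * K - a)" using a by (intro mult_left_mono) auto
  ultimately have "K * a \<le> K\<^sup>2 - (K - a)\<^sup>2" by (simp add: mult.commute)
  then show ?thesis unfolding psi_def a_def[symmetric] using assms
    by (metis mult.assoc mult_left_mono)
qed

lemma psi_quad: "0 \<le> s \<Longrightarrow> s \<le> K \<Longrightarrow> psi lam K s = lam * (2 * K * s - s\<^sup>2)"
  unfolding psi_def by (simp add: power2_eq_square algebra_simps)

lemma psi_step:
  assumes lam: "0 \<le> lam" and K: "1 \<le> K" and e: "0 < e" "e \<le> 1"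
    and \<rho>: "\<rho> = e - e\<^sup>2 / (4 * K)" and a: "0 \<le> a - \<rho>" "a + e \<le> K"
  shows "lam * e\<^sup>2 / 2 \<le> 2 * psi lam K a - psi lam K (a - \<rho>) - psi lam K (a + e)"
proof -
  have "e\<^sup>2 / (4 * K) \<le> e / 4"
  proof -
    have "e * e \<le> e * K" using e K by (intro mult_left_mono) auto
    then have "e\<^sup>2 \<le> e * K" by (simp add: power2_eq_square)
    then show ?thesis using K by (simp add: field_simps)
  qed
  then have \<rho>0: "0 \<le> \<rho>" using \<rho> e by simp
  have a0: "0 \<le> a" using a \<rho>0 by simp
  have q1: "psi lam K a = lam * (2 * K * a - a\<^sup>2)" using a0 a e by (intro psi_quad) auto
  have q2: "psi lam K (a - \<rho>) = lam * (2 * K * (a - \<rho>) - (a - \<rho>)\<^sup>2)" using a \<rho>0 e by (intro psi_quad) auto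
  have q3: "psi lam K (a + e) = lam * (2 * K * (a + e) - (a + e)\<^sup>2)" using a0 a e by (intro psi_quad) auto
  have id: "2 * (2 * K * a - a\<^sup>2) - (2 * K * (a - \<rho>) - (a - \<rho>)\<^sup>2) - (2 * K * (a + e) - (a + e)\<^sup>2)
      = - 2 * K * (e - \<rho>) + 2 * a * (e - \<rho>) + \<rho>\<^sup>2 + e\<^sup>2"
    by (simp add: power2_eq_square algebra_simps)
  have "2 * K * (e - \<rho>) = e\<^sup>2 / 2" using \<rho> K by (simp add: field_simps)
  moreover have "0 \<le> a * (e - \<rho>)" using a0 \<rho> K by simp
  ultimately have "e\<^sup>2 / 2 \<le> - 2 * K * (e - \<rho>) + 2 * a * (e - \<rho>) + \<rho>\<^sup>2 + e\<^sup>2" by simp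
  then have "lam * (e\<^sup>2 / 2) \<le> lam * (- 2 * K * (e - \<rho>) + 2 * a * (e - \<rho>) + \<rho>\<^sup>2 + e\<^sup>2)"
    using lam by (rule mult_left_mono)
  moreover have "2 * psi lam K a - psi lam K (a - \<rho>) - psi lam K (a + e) = lam * (2 * (2 * K * a - a\<^sup>2) - (2 * K * (a - \<rho>) - (a - \<rho>)\<^sup>2) - (2 * K * (a + e) - (a + e)\<^sup>2))"
    unfolding q1 q2 q3 by (simp add: algebra_simps)
  ultimately show ?thesis unfolding id by simp
qed



lemma barrier:
  fixes \<Omega> :: "'a::real_normed_vector set" and h v :: "'a \<Rightarrow> real"
  assumes e: "0 < e" "e \<le> 1" and F: "0 \<le> F" and lam: "2 * F + 2 \<le> lam" and K: "1 \<le> K"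
    and os: "OS \<Omega> e F v" and vb: "bounded (v ` closure \<Omega>)"
    and h0: "\<forall>z\<in>closure \<Omega>. 0 \<le> h z"
    and h1: "\<forall>y\<in>closure \<Omega>. \<forall>z\<in>closure \<Omega>. dist y z < e \<longrightarrow> h z \<le> h y + e"
    and Zs: "Z \<subseteq> closure \<Omega>" and Zv: "\<forall>w\<in>Z. v w \<le> A + psi lam K (h w)"
    and rest: "\<forall>y\<in>closure \<Omega> - Z. y \<in> \<Omega> \<and> h y < K - 1 \<and>
        ((\<exists>w\<in>Z. w \<in> intr_ball \<Omega> y e) \<or> (\<forall>\<eta>>0. \<exists>y'\<in>intr_ball \<Omega> y e. h y' \<le> h y - e + \<eta>))"
  shows "\<forall>z\<in>closure \<Omega>. v z \<le> A + psi lam K (h z) + (4 * lam * K * e + F * e\<^sup>2)"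
proof (cases "closure \<Omega> = {}")
  case True then show ?thesis by simp
next
  case False
  let ?E = "closure \<Omega>"
  define \<phi> where "\<phi> z = A + psi lam K (h z)" for z
  define M where "M = 4 * lam * K * e + F * e\<^sup>2"
  have lam0: "0 \<le> lam" using lam F by simp
  have K0: "0 \<le> K" using K by simp
  have M0: "0 \<le> M" unfolding M_def using lam0 K0 e F by simp
  obtain Sv where Sv: "\<forall>z\<in>?E. \<bar>v z\<bar> \<le> Sv" using vb by (auto simp: bounded_real)
  have phiA: "A \<le> \<phi> z" if "z \<in> ?E" for z
    unfolding \<phi>_def using psi_nonneg[OF lam0 K0] h0 that by auto
  have bdd: "bdd_above ((\<lambda>z. v z - \<phi> z) ` ?E)"
  proof (rule bdd_aboveI2)
    fix z assume "z \<in> ?E"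
    then show "v z - \<phi> z \<le> Sv - A" using Sv phiA[of z] by force
  qed
  define m where "m = (SUP z\<in>?E. v z - \<phi> z)"
  have up: "v z \<le> \<phi> z + m" if "z \<in> ?E" for z
    using cSUP_upper[OF that bdd] unfolding m_def by simp
  have "m \<le> M"
  proof (rule ccontr)
    assume "\<not> m \<le> M"
    then have mM: "M < m" by simp
    define \<delta> where "\<delta> = min (e\<^sup>2 / 2) ((m - M) / 3)"
    have \<delta>0: "0 < \<delta>" "\<delta> \<le> e\<^sup>2 / 2" "\<delta> \<le> (m - M) / 3"
      using e mM unfolding \<delta>_def by (simp_all only: min.cobounded1 min.cobounded2) simp
    have \<delta>: "0 < \<delta>" "2 * \<delta> \<le> e\<^sup>2" "3 * \<delta> \<le> m - M" using \<delta>0 by simp_all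
    have "m - \<delta> < m" using \<delta> by simp
    then obtain y where y: "y \<in> ?E" "m - \<delta> < v y - \<phi> y"
      unfolding m_def using less_cSUP_iff[OF False bdd] by blast
    show False
    proof (cases "y \<in> Z")
      case True
      then have "v y - \<phi> y \<le> 0" using Zv by (simp add: \<phi>_def)
      then show False using y(2) mM M0 \<delta> by linarith
    next
      case False
      then have yr: "y \<in> \<Omega>" "h y < K - 1" and
        alt: "(\<exists>w\<in>Z. w \<in> intr_ball \<Omega> y e) \<or> (\<forall>\<eta>>0. \<exists>y'\<in>intr_ball \<Omega> y e. h y' \<le> h y - e + \<eta>)"
        using rest y(1) by auto
      let ?B = "intr_ball \<Omega> y e"
      let ?P = "A + psi lam K (h y + e) + m"
      have inB: "z \<in> ?E" "h z \<le> h y + e" if "z \<in> ?B" for z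
      proof -
        show zE: "z \<in> ?E" using intr_ball_sub(1)[OF that] .
        show "h z \<le> h y + e" using h1 y(1) zE intr_ball_sub(2)[OF that] by blast
      qed
      have Pb: "\<forall>z\<in>?B. v z \<le> ?P"
      proof
        fix z assume z: "z \<in> ?B"
        have "psi lam K (h z) \<le> psi lam K (h y + e)" using psi_mono[OF lam0 inB(2)[OF z]] .
        then show "v z \<le> ?P" using up[OF inB(1)[OF z]] by (simp add: \<phi>_def)
      qed
      have osy: "2 * v y \<le> v w + ?P + e\<^sup>2 * F" if "w \<in> ?B" for w
        using os yr(1) that Pb unfolding OS_def by blast
      have vy: "A + psi lam K (h y) + m - \<delta> < v y" using y(2) by (simp add: \<phi>_def)
      from alt show False
      proof
        assume "\<exists>w\<in>Z. w \<in> ?B"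
        then obtain w where w: "w \<in> Z" "w \<in> ?B" by blast
        have "v w \<le> A + psi lam K (h w)" using Zv w(1) by blast
        also have "\<dots> \<le> A + psi lam K (h y + e)" using psi_mono[OF lam0 inB(2)[OF w(2)]] by simp
        finally have vw: "v w \<le> A + psi lam K (h y + e)" .
        have lip: "psi lam K (h y + e) - psi lam K (h y) \<le> 2 * lam * K * e"
          using psi_lip[OF lam0 K0 _ ] h0 y(1) e by auto
        have "2 * (A + psi lam K (h y) + m - \<delta>) < 2 * A + 2 * psi lam K (h y + e) + m + e\<^sup>2 * F"
          using osy[OF w(2)] vw vy by (smt (verit))
        then have "m < 2 * (psi lam K (h y + e) - psi lam K (h y)) + e\<^sup>2 * F + 2 * \<delta>" by (smt (verit))
        also have "\<dots> \<le> M + 2 * \<delta>" using lip unfolding M_def by (simp add: algebra_simps)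
        finally show False using \<delta> mM by (smt (verit))
      next
        assume st: "\<forall>\<eta>>0. \<exists>y'\<in>?B. h y' \<le> h y - e + \<eta>"
        define \<eta> where "\<eta> = e\<^sup>2 / (4 * K)"
        have "\<eta> > 0" using e K by (simp add: \<eta>_def)
        then obtain y' where y': "y' \<in> ?B" "h y' \<le> h y - e + \<eta>" using st by blast
        define \<rho> where "\<rho> = e - e\<^sup>2 / (4 * K)"
        have hy'0: "0 \<le> h y'" using h0 inB(1)[OF y'(1)] by blast
        have a1: "0 \<le> h y - \<rho>" using y' hy'0 by (simp add: \<rho>_def \<eta>_def)
        have a2: "h y + e \<le> K" using yr(2) e by simp
        have stp: "lam * e\<^sup>2 / 2 \<le> 2 * psi lam K (h y) - psi lam K (h y - \<rho>) - psi lam K (h y + e)"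
          using psi_step[OF lam0 K e \<rho>_def a1 a2] .
        have "v y' \<le> \<phi> y' + m" using up[OF inB(1)[OF y'(1)]] .
        also have "\<phi> y' \<le> A + psi lam K (h y - \<rho>)"
          unfolding \<phi>_def using psi_mono[OF lam0, of "h y'" "h y - \<rho>"] y'(2) by (simp add: \<rho>_def \<eta>_def)
        finally have vy': "v y' \<le> A + psi lam K (h y - \<rho>) + m" by simp
        have "2 * (A + psi lam K (h y) + m - \<delta>) < A + psi lam K (h y - \<rho>) + m + ?P + e\<^sup>2 * F"
          using osy[OF y'(1)] vy' vy by (smt (verit))
        then have "lam * e\<^sup>2 / 2 < e\<^sup>2 * F + 2 * \<delta>" using stp by (smt (verit))
        moreover have "(F + 1) * e\<^sup>2 \<le> lam * e\<^sup>2 / 2"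
        proof -
          have "(2 * F + 2) * e\<^sup>2 \<le> lam * e\<^sup>2" using lam by (intro mult_right_mono) auto
          then show ?thesis by (simp add: algebra_simps)
        qed
        ultimately show False using \<delta> by (simp add: algebra_simps)
      qed
    qed
  qed
  then show ?thesis using up unfolding \<phi>_def M_def by fastforce
qed



lemma open_closure_split:
  assumes "open \<Omega>" "y \<in> closure \<Omega>" "y \<notin> frontier \<Omega>"
  shows "y \<in> \<Omega>"
  using assms by (simp add: frontier_def interior_open)

lemma open_frontier_notin:
  assumes "open \<Omega>" "q \<in> frontier \<Omega>"
  shows "q \<notin> \<Omega>"
  using assms by (simp add: frontier_def interior_open)

lemma frontier_in_closure: "q \<in> frontier \<Omega> \<Longrightarrow> q \<in> closure \<Omega>"
  by (simp add: frontier_def)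

lemma global_bound:
  fixes \<Omega> :: "'a::euclidean_space set" and v :: "'a \<Rightarrow> real"
  assumes op: "open \<Omega>" and e: "0 < e" "e \<le> 1" and F: "0 \<le> F"
    and os: "OS \<Omega> e F v" and vb: "bounded (v ` closure \<Omega>)"
    and fne: "frontier \<Omega> \<noteq> {}" and W: "\<forall>y\<in>\<Omega>. infdist y (frontier \<Omega>) \<le> W" "0 \<le> W"
    and gv: "\<forall>q\<in>frontier \<Omega>. v q \<le> G"
  shows "\<forall>z\<in>closure \<Omega>. v z \<le> G + (2*F+2) * (W+2)\<^sup>2 + 4 * (2*F+2) * (W+2) + F"
proof -
  define lam where "lam = 2*F+2"
  define K where "K = W + 2"
  have lam0: "0 \<le> lam" and K1: "1 \<le> K" using F W by (auto simp: lam_def K_def)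
  let ?h = "\<lambda>z. infdist z (frontier \<Omega>)"
  have main: "\<forall>z\<in>closure \<Omega>. v z \<le> G + psi lam K (?h z) + (4 * lam * K * e + F * e\<^sup>2)"
  proof (rule barrier[OF e F _ K1 os vb])
    show "2 * F + 2 \<le> lam" by (simp add: lam_def)
    show "\<forall>z\<in>closure \<Omega>. 0 \<le> ?h z" by (simp add: infdist_nonneg)
    show "\<forall>y\<in>closure \<Omega>. \<forall>z\<in>closure \<Omega>. dist y z < e \<longrightarrow> ?h z \<le> ?h y + e"
      using infdist_triangle by (smt (verit) dist_commute)
    show "frontier \<Omega> \<subseteq> closure \<Omega>" using frontier_in_closure by blast
    show "\<forall>w\<in>frontier \<Omega>. v w \<le> G + psi lam K (?h w)"
      using gv K1 by (simp add: psi_zero)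
    show "\<forall>y\<in>closure \<Omega> - frontier \<Omega>. y \<in> \<Omega> \<and> ?h y < K - 1 \<and>
        ((\<exists>w\<in>frontier \<Omega>. w \<in> intr_ball \<Omega> y e) \<or> (\<forall>\<eta>>0. \<exists>y'\<in>intr_ball \<Omega> y e. ?h y' \<le> ?h y - e + \<eta>))"
    proof
      fix y assume y: "y \<in> closure \<Omega> - frontier \<Omega>"
      then have yO: "y \<in> \<Omega>" using open_closure_split[OF op] by blast
      have hy: "?h y < K - 1" using W yO by (auto simp: K_def)
      have "(\<exists>w\<in>frontier \<Omega>. w \<in> intr_ball \<Omega> y e) \<or> (\<forall>\<eta>>0. \<exists>y'\<in>intr_ball \<Omega> y e. ?h y' \<le> ?h y - e + \<eta>)"
      proof (cases "ball y e \<subseteq> \<Omega>")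
        case True
        obtain q where q: "q \<in> frontier \<Omega>" "?h y = dist y q"
          using infdist_attains_inf[OF frontier_closed fne] by blast
        have "q \<notin> ball y e" using True open_frontier_notin[OF op q(1)] by blast
        then have dq: "e \<le> dist y q" by (simp add: mem_ball not_less)
        have "\<forall>\<eta>>0. \<exists>y'\<in>intr_ball \<Omega> y e. ?h y' \<le> ?h y - e + \<eta>"
        proof (intro allI impI)
          fix \<eta> :: real assume "\<eta> > 0"
          from step_toward[OF e(1) this dq] obtain y' where y': "y' \<in> ball y e" "dist y' q \<le> dist y q - e + \<eta>" by blast
          have "y' \<in> intr_ball \<Omega> y e" using intr_ball_ball[OF True y'(1)] .
          moreover have "?h y' \<le> dist y' q" using infdist_le[OF q(1)] .
          ultimately show "\<exists>y'\<in>intr_ball \<Omega> y e. ?h y' \<le> ?h y - e + \<eta>" using y'(2) q(2) by force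
        qed
        then show ?thesis by blast
      next
        case False
        then show ?thesis using bdry_near[OF op yO] by blast
      qed
      then show "y \<in> \<Omega> \<and> ?h y < K - 1 \<and> ((\<exists>w\<in>frontier \<Omega>. w \<in> intr_ball \<Omega> y e) \<or> (\<forall>\<eta>>0. \<exists>y'\<in>intr_ball \<Omega> y e. ?h y' \<le> ?h y - e + \<eta>))"
        using yO hy by blast
    qed
  qed
  show ?thesis
  proof
    fix z assume z: "z \<in> closure \<Omega>"
    have "psi lam K (?h z) \<le> lam * K\<^sup>2" using psi_le_top[OF lam0] .
    moreover have "4 * lam * K * e \<le> 4 * lam * K" using e lam0 K1 by (simp add: mult_left_le)
    moreover have "F * e\<^sup>2 \<le> F" using e F by (simp add: mult_left_le power_le_one)
    ultimately show "v z \<le> G + (2*F+2) * (W+2)\<^sup>2 + 4 * (2*F+2) * (W+2) + F"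
      using main z unfolding lam_def K_def by force
  qed
qed

definition KK :: "real \<Rightarrow> real \<Rightarrow> real \<Rightarrow> real" where
  "KK F S \<rho> = 2 + \<rho> + 2 * S / ((2*F+2) * \<rho>) + 2 * S / (2*F+2)"

lemma cone_upper:
  fixes \<Omega> :: "'a::euclidean_space set" and v :: "'a \<Rightarrow> real"
  assumes op: "open \<Omega>" and e: "0 < e" "e \<le> 1" and F: "0 \<le> F"
    and os: "OS \<Omega> e F v" and S: "0 \<le> S" and vS: "\<forall>z\<in>closure \<Omega>. \<bar>v z\<bar> \<le> S"
    and c: "c \<in> closure \<Omega>" and \<rho>: "0 < \<rho>" and A: "- S \<le> A"
    and cz: "\<forall>w\<in>frontier \<Omega> \<union> {c}. dist w c < \<rho> \<longrightarrow> v w \<le> A"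
  shows "\<forall>z\<in>closure \<Omega>. v z \<le> A + 2 * (2*F+2) * KK F S \<rho> * dist z c + (4 * (2*F+2) * KK F S \<rho> + F) * e"
proof -
  define lam where "lam = 2*F+2"
  define K where "K = KK F S \<rho>"
  have lamp: "0 < lam" using F by (simp add: lam_def)
  have lam0: "0 \<le> lam" using lamp by simp
  have t1: "0 \<le> 2 * S / (lam * \<rho>)" using S lamp \<rho> by simp
  have t2: "0 \<le> 2 * S / lam" using S lamp by simp
  have Kd: "K = 2 + \<rho> + 2 * S / (lam * \<rho>) + 2 * S / lam" by (simp add: K_def KK_def lam_def)
  have K1: "1 \<le> K" "\<rho> \<le> K" using t1 t2 \<rho> Kd by linarith+
  have K0: "0 \<le> K" using K1 by simp
  have big1: "2 * S \<le> lam * K * \<rho>"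
  proof -
    have "2 * S / (lam * \<rho>) \<le> K" using Kd t2 \<rho> by linarith
    then have "2 * S \<le> K * (lam * \<rho>)" using lamp \<rho> by (simp add: divide_le_eq)
    then show ?thesis by (simp add: algebra_simps)
  qed
  have big2: "2 * S \<le> lam * K * (K - 1)"
  proof -
    have "2 * S / lam \<le> K - 1" using Kd t1 \<rho> by linarith
    then have "2 * S \<le> (K - 1) * lam" using lamp by (simp add: divide_le_eq)
    also have "\<dots> \<le> (K - 1) * lam * K"
    proof -
      have "0 \<le> (K - 1) * lam" using K1 lamp by simp
      then show ?thesis using mult_left_mono[OF K1(1), of "(K - 1) * lam"] by simp
    qed
    finally show ?thesis by (simp add: algebra_simps)
  qed
  have psi_big: "2 * S \<le> psi lam K s" if "\<rho> \<le> s \<or> K - 1 \<le> s" "0 \<le> s" for s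
  proof -
    have "lam * K * min s K \<le> psi lam K s" using psi_ge[OF lam0 K0 that(2)] .
    moreover have "2 * S \<le> lam * K * min s K"
    proof (cases "\<rho> \<le> s")
      case True
      then have "\<rho> \<le> min s K" using K1 by simp
      then have "lam * K * \<rho> \<le> lam * K * min s K" using lam0 K0 by (simp add: mult_left_mono)
      then show ?thesis using big1 by linarith
    next
      case False
      then have "K - 1 \<le> min s K" using that K1 by auto
      then have "lam * K * (K - 1) \<le> lam * K * min s K" using lam0 K0 by (simp add: mult_left_mono)
      then show ?thesis using big2 by linarith
    qed
    ultimately show ?thesis by linarith
  qed
  let ?h = "\<lambda>z. dist z c"
  let ?Z = "frontier \<Omega> \<union> {c} \<union> {w\<in>closure \<Omega>. K - 1 \<le> dist w c}"
  have main: "\<forall>z\<in>closure \<Omega>. v z \<le> A + psi lam K (?h z) + (4 * lam * K * e + F * e\<^sup>2)"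
  proof (rule barrier[OF e F _ K1(1) os])
    show "bounded (v ` closure \<Omega>)" using vS by (auto simp: bounded_real)
    show "2 * F + 2 \<le> lam" by (simp add: lam_def)
    show "\<forall>z\<in>closure \<Omega>. 0 \<le> ?h z" by simp
    show "\<forall>y\<in>closure \<Omega>. \<forall>z\<in>closure \<Omega>. dist y z < e \<longrightarrow> ?h z \<le> ?h y + e"
      by (smt (verit) dist_commute dist_triangle)
    show "?Z \<subseteq> closure \<Omega>" using frontier_in_closure c by blast
    show "\<forall>w\<in>?Z. v w \<le> A + psi lam K (?h w)"
    proof
      fix w assume w: "w \<in> ?Z"
      then have wE: "w \<in> closure \<Omega>" using frontier_in_closure c by blast
      show "v w \<le> A + psi lam K (?h w)"
      proof (cases "w \<in> frontier \<Omega> \<union> {c} \<and> dist w c < \<rho>")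
        case True
        then have "v w \<le> A" using cz by blast
        moreover have "0 \<le> psi lam K (?h w)" using psi_nonneg[OF lam0 K0] by simp
        ultimately show ?thesis by linarith
      next
        case False
        then have "\<rho> \<le> dist w c \<or> K - 1 \<le> dist w c" using w by auto
        then have "2 * S \<le> psi lam K (?h w)" using psi_big by simp
        moreover have "v w \<le> S" using vS wE by force
        ultimately show ?thesis using A by linarith
      qed
    qed
    show "\<forall>y\<in>closure \<Omega> - ?Z. y \<in> \<Omega> \<and> ?h y < K - 1 \<and>
        ((\<exists>w\<in>?Z. w \<in> intr_ball \<Omega> y e) \<or> (\<forall>\<eta>>0. \<exists>y'\<in>intr_ball \<Omega> y e. ?h y' \<le> ?h y - e + \<eta>))"
    proof
      fix y assume y: "y \<in> closure \<Omega> - ?Z"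
      then have yO: "y \<in> \<Omega>" using open_closure_split[OF op] by blast
      have hy: "?h y < K - 1" using y by auto
      have "(\<exists>w\<in>?Z. w \<in> intr_ball \<Omega> y e) \<or> (\<forall>\<eta>>0. \<exists>y'\<in>intr_ball \<Omega> y e. ?h y' \<le> ?h y - e + \<eta>)"
      proof (cases "ball y e \<subseteq> \<Omega>")
        case True
        show ?thesis
        proof (cases "dist y c < e")
          case True
          then have "c \<in> ball y e" by simp
          then have "c \<in> intr_ball \<Omega> y e" using intr_ball_ball[OF \<open>ball y e \<subseteq> \<Omega>\<close>] by blast
          then show ?thesis by blast
        next
          case False
          then have dq: "e \<le> dist y c" by simp
          have "\<forall>\<eta>>0. \<exists>y'\<in>intr_ball \<Omega> y e. ?h y' \<le> ?h y - e + \<eta>"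
          proof (intro allI impI)
            fix \<eta> :: real assume "\<eta> > 0"
            from step_toward[OF e(1) this dq] obtain y' where y': "y' \<in> ball y e" "dist y' c \<le> dist y c - e + \<eta>" by blast
            have "y' \<in> intr_ball \<Omega> y e" using intr_ball_ball[OF \<open>ball y e \<subseteq> \<Omega>\<close> y'(1)] .
            then show "\<exists>y'\<in>intr_ball \<Omega> y e. ?h y' \<le> ?h y - e + \<eta>" using y'(2) by force
          qed
          then show ?thesis by blast
        qed
      next
        case False
        then obtain q where "q \<in> frontier \<Omega>" "q \<in> intr_ball \<Omega> y e" using bdry_near[OF op yO] by blast
        then show ?thesis by blast
      qed
      then show "y \<in> \<Omega> \<and> ?h y < K - 1 \<and> ((\<exists>w\<in>?Z. w \<in> intr_ball \<Omega> y e) \<or> (\<forall>\<eta>>0. \<exists>y'\<in>intr_ball \<Omega> y e. ?h y' \<le> ?h y - e + \<eta>))"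
        using yO hy by blast
    qed
  qed
  show ?thesis
  proof
    fix z assume z: "z \<in> closure \<Omega>"
    have "psi lam K (?h z) \<le> 2 * lam * K * dist z c" using psi_le_lin[OF lam0 K0] by simp
    moreover have "F * e\<^sup>2 \<le> F * e" using e F by (simp add: mult_left_mono power2_eq_square mult_left_le)
    ultimately have "v z \<le> A + 2 * lam * K * dist z c + (4 * lam * K + F) * e"
      using main z by (simp add: algebra_simps) (smt (verit))
    then show "v z \<le> A + 2 * (2*F+2) * KK F S \<rho> * dist z c + (4 * (2*F+2) * KK F S \<rho> + F) * e"
      by (simp add: lam_def K_def)
  qed
qed



lemma diag_pointwise:
  fixes V :: "nat \<Rightarrow> 'a \<Rightarrow> real" and d :: "nat \<Rightarrow> 'a"
  assumes bdd: "\<And>i n. \<bar>V i (d n)\<bar> \<le> S"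
  shows "\<exists>r. strict_mono r \<and> (\<forall>n. convergent (\<lambda>k. V (r k) (d n)))"
proof -
  let ?P = "\<lambda>n. \<lambda>s. convergent (\<lambda>k. V (s k) (d n))"
  interpret nat: subseqs ?P
  proof (unfold convergent_def, unfold subseqs_def, auto)
    fix n :: nat and s :: "nat \<Rightarrow> nat" assume s: "strict_mono s"
    have "bounded {-S..S}" using bounded_closed_interval by auto
    moreover have "\<And>k. V (s k) (d n) \<in> {-S..S}"
      using bdd by (simp add: abs_le_iff minus_le_iff)
    ultimately have "\<exists>l s'. strict_mono s' \<and> ((\<lambda>k. V (s k) (d n)) \<circ> s') \<longlonglongrightarrow> l"
      using compact_Icc compact_imp_seq_compact seq_compactE by metis
    thus "\<exists>s'. strict_mono (s'::nat\<Rightarrow>nat) \<and> (\<exists>l. (\<lambda>k. V (s (s' k)) (d n)) \<longlonglongrightarrow> l)"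
      by (auto simp: comp_def)
  qed
  define r where "r = nat.diagseq"
  have subseq: "strict_mono r"
    unfolding r_def using nat.subseq_diagseq by auto
  have cnv: "?P n r" for n
  proof -
    have Pn_seqseq: "?P n (nat.seqseq (Suc n))"
      by (rule nat.seqseq_holds)
    have 1: "(\<lambda>k. V ((nat.seqseq (Suc n) \<circ> (\<lambda>k. nat.fold_reduce (Suc n) k
      (Suc n + k))) k) (d n)) = (\<lambda>k. V (nat.seqseq (Suc n) k) (d n)) \<circ>
      (\<lambda>k. nat.fold_reduce (Suc n) k (Suc n + k))"
      by auto
    have 2: "?P n (r \<circ> ((+) (Suc n)))"
      unfolding r_def nat.diagseq_seqseq 1
      by (intro convergent_subseq_convergent Pn_seqseq nat.subseq_diagonal_rest)
    then obtain L where 3: "(\<lambda>na. V (r (na + Suc n)) (d n)) \<longlonglongrightarrow> L"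
      by (auto simp: add.commute dest: convergentD)
    then have "(\<lambda>k. V (r k) (d n)) \<longlonglongrightarrow> L"
      by (rule LIMSEQ_offset)
    then show ?thesis
      by (auto simp: convergent_def)
  qed
  show ?thesis using subseq cnv by blast
qed

lemma AA:
  fixes U :: "nat \<Rightarrow> 'a::euclidean_space \<Rightarrow> real" and E :: "'a set"
  assumes bound: "\<forall>i\<ge>N0. \<forall>z\<in>E. \<bar>U i z\<bar> \<le> S"
    and equi: "\<forall>x\<in>E. \<forall>\<eta>>0. \<exists>\<rho>>0. \<exists>N. \<forall>i\<ge>N. \<forall>y\<in>E. \<forall>y'\<in>E. dist y x < \<rho> \<longrightarrow> dist y' x < \<rho> \<longrightarrow> \<bar>U i y - U i y'\<bar> \<le> \<eta>"
  shows "\<exists>r v. strict_mono r \<and> continuous_on E v \<and> (\<forall>K. compact K \<and> K \<subseteq> E \<longrightarrow> uniform_limit K (\<lambda>k. U (r k)) v sequentially)"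
proof (cases "E = {}")
  case True
  have "strict_mono (\<lambda>k::nat. k)" by (simp add: strict_mono_def)
  then show ?thesis using True by (intro exI[of _ "\<lambda>k. k"] exI[of _ "\<lambda>_. 0"]) (auto simp: uniform_limit_iff)
next
  case False
  obtain T where T: "countable T" "T \<subseteq> E" "E \<subseteq> closure T" using separable by blast
  have Tne: "T \<noteq> {}" using False T(3) by auto
  define d where "d = from_nat_into T"
  have dT: "d n \<in> T" for n using from_nat_into[OF Tne] by (simp add: d_def)
  have Td: "t \<in> T \<Longrightarrow> \<exists>n. d n = t" for t using range_from_nat_into[OF Tne T(1)] unfolding d_def by (metis rangeE)
  define V where "V i z = U (i + N0) z" for i z
  have "\<bar>V i (d n)\<bar> \<le> S" for i n
  proof -
    have "d n \<in> E" using dT T(2) by blast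
    moreover have "N0 \<le> i + N0" by simp
    ultimately show ?thesis using bound unfolding V_def by blast
  qed
  then obtain r0 where r0: "strict_mono r0" "\<forall>n. convergent (\<lambda>k. V (r0 k) (d n))"
    using diag_pointwise by blast
  define r where "r k = r0 k + N0" for k
  have r: "strict_mono r" using r0(1) by (simp add: r_def strict_mono_def)
  have rk: "k \<le> r k" for k using seq_suble[OF r] .
  define W where "W k = U (r k)" for k
  have Wc: "convergent (\<lambda>k. W k t)" if "t \<in> T" for t
    using r0(2) Td[OF that] by (auto simp: W_def r_def V_def)
  have Q: "\<exists>\<rho>>0. \<exists>N. \<forall>k\<ge>N. \<forall>l\<ge>N. \<forall>y\<in>E. dist y x < \<rho> \<longrightarrow> \<bar>W k y - W l y\<bar> \<le> 3 * \<eta>"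
    if x: "x \<in> E" and \<eta>: "\<eta> > 0" for x \<eta>
  proof -
    obtain \<rho> N1 where \<rho>: "\<rho> > 0" and N1: "\<forall>i\<ge>N1. \<forall>y\<in>E. \<forall>y'\<in>E. dist y x < \<rho> \<longrightarrow> dist y' x < \<rho> \<longrightarrow> \<bar>U i y - U i y'\<bar> \<le> \<eta>"
      using equi x \<eta> by blast
    obtain t where t: "t \<in> T" "dist t x < \<rho>" using T(3) x \<rho> closure_approachable by blast
    have "Cauchy (\<lambda>k. W k t)" using Wc[OF t(1)] Cauchy_convergent_iff by blast
    then obtain N2 where N2: "\<forall>k\<ge>N2. \<forall>l\<ge>N2. dist (W k t) (W l t) < \<eta>"
      using \<eta> unfolding Cauchy_def by blast
    have tE: "t \<in> E" using t T(2) by blast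
    have "\<forall>k\<ge>max N1 N2. \<forall>l\<ge>max N1 N2. \<forall>y\<in>E. dist y x < \<rho> \<longrightarrow> \<bar>W k y - W l y\<bar> \<le> 3 * \<eta>"
    proof (intro allI impI ballI)
      fix k l y assume k: "max N1 N2 \<le> k" and l: "max N1 N2 \<le> l" and y: "y \<in> E" and dy: "dist y x < \<rho>"
      have a: "\<bar>W k y - W k t\<bar> \<le> \<eta>" using N1 rk[of k] k y tE dy t(2) by (auto simp: W_def)
      have b: "\<bar>W l y - W l t\<bar> \<le> \<eta>" using N1 rk[of l] l y tE dy t(2) by (auto simp: W_def)
      have c: "\<bar>W k t - W l t\<bar> < \<eta>" using N2 k l by (auto simp: dist_real_def)
      show "\<bar>W k y - W l y\<bar> \<le> 3 * \<eta>" using a b c by linarith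
    qed
    then show ?thesis using \<rho> by blast
  qed
  have UC: "\<exists>N. \<forall>k\<ge>N. \<forall>l\<ge>N. \<forall>y\<in>K. \<bar>W k y - W l y\<bar> \<le> 3 * \<eta>"
    if K: "compact K" "K \<subseteq> E" and \<eta>: "\<eta> > 0" for K \<eta>
  proof -
    have "\<forall>x\<in>K. \<exists>\<rho>N. fst \<rho>N > 0 \<and> (\<forall>k\<ge>snd \<rho>N. \<forall>l\<ge>snd \<rho>N. \<forall>y\<in>E. dist y x < fst \<rho>N \<longrightarrow> \<bar>W k y - W l y\<bar> \<le> 3 * \<eta>)"
    proof
      fix x assume "x \<in> K"
      then obtain \<rho> N where "\<rho> > 0" "\<forall>k\<ge>N. \<forall>l\<ge>N. \<forall>y\<in>E. dist y x < \<rho> \<longrightarrow> \<bar>W k y - W l y\<bar> \<le> 3 * \<eta>"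
        using Q K(2) \<eta> by blast
      then show "\<exists>\<rho>N. fst \<rho>N > 0 \<and> (\<forall>k\<ge>snd \<rho>N. \<forall>l\<ge>snd \<rho>N. \<forall>y\<in>E. dist y x < fst \<rho>N \<longrightarrow> \<bar>W k y - W l y\<bar> \<le> 3 * \<eta>)"
        by (intro exI[of _ "(\<rho>, N)"]) simp
    qed
    from bchoice[OF this] obtain g where g: "\<forall>x\<in>K. fst (g x) > 0 \<and> (\<forall>k\<ge>snd (g x). \<forall>l\<ge>snd (g x). \<forall>y\<in>E. dist y x < fst (g x) \<longrightarrow> \<bar>W k y - W l y\<bar> \<le> 3 * \<eta>)"
      by blast
    have cov: "K \<subseteq> \<Union> ((\<lambda>x. ball x (fst (g x))) ` K)"
      using g by (auto intro!: bexI)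
    obtain C where C: "C \<subseteq> K" "finite C" "K \<subseteq> \<Union> ((\<lambda>x. ball x (fst (g x))) ` C)"
      using compactE_image[OF K(1) _ cov] by blast
    define N where "N = Max (insert 0 ((\<lambda>x. snd (g x)) ` C))"
    have NC: "snd (g x) \<le> N" if "x \<in> C" for x using C(2) that by (simp add: N_def)
    show ?thesis
    proof (intro exI allI impI ballI)
      fix k l y assume k: "N \<le> k" and l: "N \<le> l" and y: "y \<in> K"
      obtain x where x: "x \<in> C" "y \<in> ball x (fst (g x))" using C(3) y by blast
      have xK: "x \<in> K" using x C by blast
      have gx: "\<forall>k\<ge>snd (g x). \<forall>l\<ge>snd (g x). \<forall>y\<in>E. dist y x < fst (g x) \<longrightarrow> \<bar>W k y - W l y\<bar> \<le> 3 * \<eta>"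
        using g xK by blast
      have "snd (g x) \<le> k" "snd (g x) \<le> l" using NC[OF x(1)] k l by linarith+
      moreover have "y \<in> E" using y K(2) by blast
      moreover have "dist y x < fst (g x)" using x(2) by (simp add: dist_commute)
      ultimately show "\<bar>W k y - W l y\<bar> \<le> 3 * \<eta>" using gx by blast
    qed
  qed
  have conv: "convergent (\<lambda>k. W k x)" if xE: "x \<in> E" for x
  proof -
    have "Cauchy (\<lambda>k. W k x)"
    proof (rule metric_CauchyI)
      fix \<epsilon> :: real assume "\<epsilon> > 0"
      then obtain N where N: "\<forall>k\<ge>N. \<forall>l\<ge>N. \<forall>y\<in>{x}. \<bar>W k y - W l y\<bar> \<le> 3 * (\<epsilon> / 4)"
        using UC[of "{x}" "\<epsilon> / 4"] xE by auto
      show "\<exists>M. \<forall>m\<ge>M. \<forall>n\<ge>M. dist (W m x) (W n x) < \<epsilon>"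
      proof (intro exI[of _ N] allI impI)
        fix m n assume "N \<le> m" "N \<le> n"
        then have "\<bar>W m x - W n x\<bar> \<le> 3 * (\<epsilon> / 4)" using N by blast
        then show "dist (W m x) (W n x) < \<epsilon>" using \<open>\<epsilon> > 0\<close> by (simp add: dist_real_def)
      qed
    qed
    then show ?thesis using Cauchy_convergent_iff by blast
  qed
  define v where "v x = lim (\<lambda>k. W k x)" for x
  have lim: "(\<lambda>k. W k x) \<longlonglongrightarrow> v x" if "x \<in> E" for x
    using conv[OF that] unfolding v_def by (rule convergent_LIMSEQ_iff[THEN iffD1])
  have ul: "uniform_limit K (\<lambda>k. U (r k)) v sequentially" if K: "compact K" "K \<subseteq> E" for K
  proof (rule uniform_limitI)
    fix \<epsilon> :: real assume \<epsilon>: "\<epsilon> > 0"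
    obtain N where N: "\<forall>k\<ge>N. \<forall>l\<ge>N. \<forall>y\<in>K. \<bar>W k y - W l y\<bar> \<le> 3 * (\<epsilon> / 6)"
      using UC[OF K, of "\<epsilon> / 6"] \<epsilon> by auto
    have "\<forall>k\<ge>N. \<forall>y\<in>K. dist (U (r k) y) (v y) < \<epsilon>"
    proof (intro allI impI ballI)
      fix k y assume k: "N \<le> k" and y: "y \<in> K"
      have "(\<lambda>l. \<bar>W k y - W l y\<bar>) \<longlonglongrightarrow> \<bar>W k y - v y\<bar>"
        using lim[of y] y K(2) by (intro tendsto_intros) auto
      moreover have "\<exists>M. \<forall>l\<ge>M. \<bar>W k y - W l y\<bar> \<le> 3 * (\<epsilon> / 6)" using N k y by blast
      ultimately have "\<bar>W k y - v y\<bar> \<le> 3 * (\<epsilon> / 6)" by (rule LIMSEQ_le_const2)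
      then show "dist (U (r k) y) (v y) < \<epsilon>" using \<epsilon> by (simp add: W_def dist_real_def)
    qed
    then show "\<forall>\<^sub>F k in sequentially. \<forall>y\<in>K. dist (U (r k) y) (v y) < \<epsilon>"
      using eventually_sequentially by blast
  qed
  have cont: "continuous_on E v"
    unfolding continuous_on_iff
  proof (intro ballI allI impI)
    fix x \<epsilon> assume x: "x \<in> E" and \<epsilon>: "(\<epsilon>::real) > 0"
    obtain \<rho> N1 where \<rho>: "\<rho> > 0" and N1: "\<forall>i\<ge>N1. \<forall>y\<in>E. \<forall>y'\<in>E. dist y x < \<rho> \<longrightarrow> dist y' x < \<rho> \<longrightarrow> \<bar>U i y - U i y'\<bar> \<le> \<epsilon> / 2"
    proof -
      have "\<epsilon> / 2 > 0" using \<epsilon> by simp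
      then show ?thesis using that equi x by blast
    qed
    show "\<exists>\<delta>>0. \<forall>x'\<in>E. dist x' x < \<delta> \<longrightarrow> dist (v x') (v x) < \<epsilon>"
    proof (intro exI conjI ballI impI)
      fix x' assume x': "x' \<in> E" "dist x' x < \<rho>"
      have "(\<lambda>k. \<bar>W k x' - W k x\<bar>) \<longlonglongrightarrow> \<bar>v x' - v x\<bar>"
        using lim x x' by (intro tendsto_intros) auto
      moreover have "\<exists>M. \<forall>k\<ge>M. \<bar>W k x' - W k x\<bar> \<le> \<epsilon> / 2"
      proof (intro exI[of _ N1] allI impI)
        fix k assume "N1 \<le> k"
        then have "N1 \<le> r k" using rk[of k] by linarith
        moreover have "dist x x < \<rho>" using \<rho> by simp
        ultimately show "\<bar>W k x' - W k x\<bar> \<le> \<epsilon> / 2" using N1 x x' unfolding W_def by blast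
      qed
      ultimately have "\<bar>v x' - v x\<bar> \<le> \<epsilon> / 2" by (rule LIMSEQ_le_const2)
      then show "dist (v x') (v x) < \<epsilon>" using \<epsilon> by (simp add: dist_real_def)
    qed (use \<rho> in auto)
  qed
  show ?thesis using r cont ul by blast
qed



lemma eps_small:
  assumes "\<epsilon> \<longlonglongrightarrow> 0" "t > 0"
  shows "\<exists>N. \<forall>i\<ge>N. \<epsilon> i < (t::real)"
proof -
  obtain N where "\<forall>n\<ge>N. norm (\<epsilon> n - 0) < t" using LIMSEQ_D[OF assms] by blast
  then show ?thesis by (auto intro!: exI[of _ N])
qed

lemma equi_lemma:
  fixes \<Omega> :: "'a::euclidean_space set" and u :: "nat \<Rightarrow> 'a \<Rightarrow> real"
  assumes op: "open \<Omega>" and F: "0 \<le> F" and S: "0 \<le> S"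
    and eps_pos: "\<And>i. \<epsilon> i > 0" and eps_lim: "\<epsilon> \<longlonglongrightarrow> 0"
    and i0: "\<forall>i\<ge>i0. \<epsilon> i \<le> 1"
    and os: "\<forall>i\<ge>i0. OS \<Omega> (\<epsilon> i) F (u i) \<and> OS \<Omega> (\<epsilon> i) F (\<lambda>z. - u i z)"
    and uS: "\<forall>i\<ge>i0. \<forall>z\<in>closure \<Omega>. \<bar>u i z\<bar> \<le> S"
    and gS: "\<forall>q\<in>frontier \<Omega>. \<bar>g q\<bar> \<le> S"
    and g_cont: "continuous_on (frontier \<Omega>) g"
    and u_bd: "\<And>i x. x \<in> frontier \<Omega> \<Longrightarrow> u i x = g x"
  shows "\<forall>x\<in>closure \<Omega>. \<forall>\<eta>>0. \<exists>\<rho>>0. \<exists>N. \<forall>i\<ge>N. \<forall>y\<in>closure \<Omega>. \<forall>y'\<in>closure \<Omega>.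
           dist y x < \<rho> \<longrightarrow> dist y' x < \<rho> \<longrightarrow> \<bar>u i y - u i y'\<bar> \<le> \<eta>"
proof (intro ballI allI impI)
  fix x and \<eta> :: real assume x: "x \<in> closure \<Omega>" and \<eta>: "\<eta> > 0"
  have uS': "\<forall>z\<in>closure \<Omega>. \<bar>- u i z\<bar> \<le> S" if "i \<ge> i0" for i using uS that by simp
  show "\<exists>\<rho>>0. \<exists>N. \<forall>i\<ge>N. \<forall>y\<in>closure \<Omega>. \<forall>y'\<in>closure \<Omega>.
           dist y x < \<rho> \<longrightarrow> dist y' x < \<rho> \<longrightarrow> \<bar>u i y - u i y'\<bar> \<le> \<eta>"
  proof (cases "x \<in> \<Omega>")
    case True
    obtain r0 where r0: "r0 > 0" "ball x r0 \<subseteq> \<Omega>" using op True open_contains_ball by blast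
    define r where "r = r0 / 2"
    have r: "r > 0" using r0 by (simp add: r_def)
    have bz: "ball z r \<subseteq> \<Omega>" if "z \<in> ball x r" for z
    proof
      fix w assume "w \<in> ball z r"
      then have "dist x w < r0" using that dist_triangle[of x w z] by (simp add: r_def)
      then show "w \<in> \<Omega>" using r0 by auto
    qed
    define L where "L = 2 * (2*F+2) * KK F S r"
    define C where "C = 4 * (2*F+2) * KK F S r + F"
    have est: "\<bar>u i w - u i z\<bar> \<le> L * dist w z + C * \<epsilon> i"
      if i: "i \<ge> i0" and z: "z \<in> ball x r" and w: "w \<in> closure \<Omega>" for i z w
    proof -
      have zO: "z \<in> \<Omega>" using bz[OF z] r by auto
      then have zE: "z \<in> closure \<Omega>" using closure_subset by blast
      have nf: "w' \<notin> frontier \<Omega>" if "dist w' z < r" for w'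
      proof -
        have "w' \<in> ball z r" using that by (simp add: dist_commute)
        then have "w' \<in> \<Omega>" using bz[OF z] by blast
        then show ?thesis using open_frontier_notin[OF op] by blast
      qed
      have e: "0 < \<epsilon> i" "\<epsilon> i \<le> 1" using eps_pos i0 i by auto
      have A1: "- S \<le> u i z" using uS i zE by force
      have A2: "- S \<le> - u i z" using uS i zE by force
      have c1: "\<forall>w\<in>frontier \<Omega> \<union> {z}. dist w z < r \<longrightarrow> u i w \<le> u i z" using nf by auto
      have c2: "\<forall>w\<in>frontier \<Omega> \<union> {z}. dist w z < r \<longrightarrow> - u i w \<le> - u i z" using nf by auto
      have "u i w \<le> u i z + L * dist w z + C * \<epsilon> i"
        using cone_upper[OF op e F _ S _ zE r A1 c1] os uS i w unfolding L_def C_def by blast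
      moreover have "- u i w \<le> - u i z + L * dist w z + C * \<epsilon> i"
        using cone_upper[OF op e F _ S _ zE r A2 c2] os uS'[OF i] i w unfolding L_def C_def by blast
      ultimately show ?thesis by linarith
    qed
    have L0: "0 \<le> L" and C0: "0 \<le> C"
    proof -
      have "0 \<le> KK F S r" using F S r by (simp add: KK_def)
      then show "0 \<le> L" "0 \<le> C" using F by (simp_all add: L_def C_def)
    qed
    define \<rho> where "\<rho> = min r (\<eta> / (4 * (L + 1)))"
    have \<rho>3: "4 * (L + 1) * \<rho> \<le> \<eta>"
    proof -
      have "\<rho> \<le> \<eta> / (4 * (L + 1))" by (simp add: \<rho>_def)
      then have "4 * (L + 1) * \<rho> \<le> 4 * (L + 1) * (\<eta> / (4 * (L + 1)))"
        by (rule mult_left_mono) (use L0 in simp)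
      also have "\<dots> = \<eta>" using L0 by simp
      finally show ?thesis .
    qed
    have \<rho>: "\<rho> > 0" "\<rho> \<le> r" "4 * (L + 1) * \<rho> \<le> \<eta>" using r \<eta> L0 \<rho>3
      by (auto simp: \<rho>_def)
    have "\<eta> / (2 * (C + 1)) > 0" using \<eta> C0 by simp
    then obtain N1 where N1: "\<forall>i\<ge>N1. \<epsilon> i < \<eta> / (2 * (C + 1))"
      using eps_small[OF eps_lim] by blast
    show ?thesis
    proof (intro exI[of _ \<rho>] conjI exI[of _ "max i0 N1"] allI impI ballI)
      fix i y y' assume i: "max i0 N1 \<le> i" and y: "y \<in> closure \<Omega>" and y': "y' \<in> closure \<Omega>"
        and dy: "dist y x < \<rho>" and dy': "dist y' x < \<rho>"
      have z: "y' \<in> ball x r" using dy' \<rho> by (simp add: dist_commute)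
      have "\<bar>u i y - u i y'\<bar> \<le> L * dist y y' + C * \<epsilon> i" using est[OF _ z y] i by simp
      moreover have "dist y y' < 2 * \<rho>" using dy dy' dist_triangle[of y y' x] by (simp add: dist_commute)
      then have "L * dist y y' \<le> L * (2 * \<rho>)" using L0 by (simp add: mult_left_mono)
      moreover have "C * \<epsilon> i \<le> \<eta> / 2"
      proof -
        have "\<epsilon> i < \<eta> / (2 * (C + 1))" using N1 i by simp
        then have "(C + 1) * \<epsilon> i \<le> \<eta> / 2" using C0 by (simp add: field_simps)
        moreover have "C * \<epsilon> i \<le> (C + 1) * \<epsilon> i" using eps_pos[of i] by simp
        ultimately show ?thesis by linarith
      qed
      moreover have "L * (2 * \<rho>) \<le> \<eta> / 2"
      proof -
        have "L * (2 * \<rho>) \<le> (L + 1) * (2 * \<rho>)" using \<rho> by simp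
        then show ?thesis using \<rho>(3) by (simp add: algebra_simps)
      qed
      ultimately show "\<bar>u i y - u i y'\<bar> \<le> \<eta>" by linarith
    qed (use \<rho> in auto)
  next
    case False
    then have xF: "x \<in> frontier \<Omega>" using x by (simp add: frontier_def interior_open op)
    have \<eta>4: "\<eta> / 4 > 0" using \<eta> by simp
    obtain \<rho>g where \<rho>g: "\<rho>g > 0" "\<forall>q\<in>frontier \<Omega>. dist q x < \<rho>g \<longrightarrow> dist (g q) (g x) < \<eta> / 4"
      using g_cont xF \<eta>4 unfolding continuous_on_iff by blast
    define L where "L = 2 * (2*F+2) * KK F S \<rho>g"
    define C where "C = 4 * (2*F+2) * KK F S \<rho>g + F"
    have est: "\<bar>u i w - g x\<bar> \<le> \<eta> / 4 + L * dist w x + C * \<epsilon> i"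
      if i: "i \<ge> i0" and w: "w \<in> closure \<Omega>" for i w
    proof -
      have e: "0 < \<epsilon> i" "\<epsilon> i \<le> 1" using eps_pos i0 i by auto
      have A1: "- S \<le> g x + \<eta> / 4" using gS xF \<eta> by force
      have A2: "- S \<le> - g x + \<eta> / 4" using gS xF \<eta> by force
      have gq: "\<bar>g q - g x\<bar> < \<eta> / 4" if "q \<in> frontier \<Omega> \<union> {x}" "dist q x < \<rho>g" for q
        using that \<rho>g \<eta> by (auto simp: dist_real_def)
      have c1: "\<forall>w\<in>frontier \<Omega> \<union> {x}. dist w x < \<rho>g \<longrightarrow> u i w \<le> g x + \<eta> / 4"
        using gq u_bd xF by (smt (verit) Un_iff singletonD)
      have c2: "\<forall>w\<in>frontier \<Omega> \<union> {x}. dist w x < \<rho>g \<longrightarrow> - u i w \<le> - g x + \<eta> / 4"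
        using gq u_bd xF by (smt (verit) Un_iff singletonD)
      have "u i w \<le> g x + \<eta> / 4 + L * dist w x + C * \<epsilon> i"
        using cone_upper[OF op e F _ S _ x \<rho>g(1) A1 c1] os uS i w unfolding L_def C_def by blast
      moreover have "- u i w \<le> - g x + \<eta> / 4 + L * dist w x + C * \<epsilon> i"
        using cone_upper[OF op e F _ S _ x \<rho>g(1) A2 c2] os uS'[OF i] i w unfolding L_def C_def by blast
      ultimately show ?thesis by linarith
    qed
    have L0: "0 \<le> L" and C0: "0 \<le> C"
    proof -
      have "0 \<le> KK F S \<rho>g" using F S \<rho>g by (simp add: KK_def)
      then show "0 \<le> L" "0 \<le> C" using F by (simp_all add: L_def C_def)
    qed
    define \<rho> where "\<rho> = \<eta> / (8 * (L + 1))"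
    have \<rho>: "\<rho> > 0" "8 * (L + 1) * \<rho> = \<eta>" using \<eta> L0 by (auto simp: \<rho>_def field_simps)
    have "\<eta> / (8 * (C + 1)) > 0" using \<eta> C0 by simp
    then obtain N1 where N1: "\<forall>i\<ge>N1. \<epsilon> i < \<eta> / (8 * (C + 1))"
      using eps_small[OF eps_lim] by blast
    show ?thesis
    proof (intro exI[of _ \<rho>] conjI exI[of _ "max i0 N1"] allI impI ballI)
      fix i y y' assume i: "max i0 N1 \<le> i" and y: "y \<in> closure \<Omega>" and y': "y' \<in> closure \<Omega>"
        and dy: "dist y x < \<rho>" and dy': "dist y' x < \<rho>"
      have Ce: "C * \<epsilon> i \<le> \<eta> / 8"
      proof -
        have "\<epsilon> i < \<eta> / (8 * (C + 1))" using N1 i by simp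
        then have "(C + 1) * \<epsilon> i \<le> \<eta> / 8" using C0 by (simp add: field_simps)
        moreover have "C * \<epsilon> i \<le> (C + 1) * \<epsilon> i" using eps_pos[of i] by simp
        ultimately show ?thesis by linarith
      qed
      have Ld: "L * dist z x \<le> \<eta> / 8" if "dist z x < \<rho>" for z
      proof -
        have "L * dist z x \<le> (L + 1) * \<rho>" using L0 that
          by (meson add_nonneg_nonneg less_add_same_cancel1 less_eq_real_def mult_mono zero_le_dist zero_less_one)
        then show ?thesis using \<rho>(2) by (simp add: algebra_simps)
      qed
      have "\<bar>u i y - g x\<bar> \<le> \<eta> / 4 + L * dist y x + C * \<epsilon> i" using est i y by simp
      moreover have "\<bar>u i y' - g x\<bar> \<le> \<eta> / 4 + L * dist y' x + C * \<epsilon> i" using est i y' by simp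
      ultimately show "\<bar>u i y - u i y'\<bar> \<le> \<eta>" using Ce Ld[OF dy] Ld[OF dy'] by linarith
    qed (use \<rho> in auto)
  qed
qed



lemma lap_bound:
  fixes \<Omega> :: "'a::real_normed_vector set"
  assumes x: "x \<in> \<Omega>" and e: "e > 0" and vS: "\<forall>z\<in>closure \<Omega>. \<bar>v z\<bar> \<le> S"
  shows "\<bar>eps_inf_lap \<Omega> e v x\<bar> \<le> 4 * S"
proof -
  let ?B = "intr_ball \<Omega> x e"
  have xB: "x \<in> ?B" using center_in_intr_ball[OF x e] .
  have ne: "?B \<noteq> {}" using xB by blast
  have sub: "?B \<subseteq> closure \<Omega>" using intr_ball_sub(1) by blast
  have b: "\<bar>v z\<bar> \<le> S" if "z \<in> ?B" for z using vS sub that by blast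
  have bb: "bdd_below (v ` ?B)"
  proof (rule bdd_belowI2[where m="- S"])
    fix z assume "z \<in> ?B" then show "- S \<le> v z" using b[of z] by linarith
  qed
  have ba: "bdd_above (v ` ?B)"
  proof (rule bdd_aboveI2[where M=S])
    fix z assume "z \<in> ?B" then show "v z \<le> S" using b[of z] by linarith
  qed
  have i1: "- S \<le> (INF y\<in>?B. v y)"
  proof (rule cINF_greatest[OF ne])
    fix z assume "z \<in> ?B" then show "- S \<le> v z" using b[of z] by linarith
  qed
  have i2: "(INF y\<in>?B. v y) \<le> S" using cINF_lower[OF bb xB] b[OF xB] by simp
  have s1: "(SUP y\<in>?B. v y) \<le> S"
  proof (rule cSUP_least[OF ne])
    fix z assume "z \<in> ?B" then show "v z \<le> S" using b[of z] by linarith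
  qed
  have s2: "- S \<le> (SUP y\<in>?B. v y)" using cSUP_upper[OF xB ba] b[OF xB] by simp
  have vx: "\<bar>v x\<bar> \<le> S" using b[OF xB] .
  show ?thesis unfolding eps_inf_lap_def using i1 i2 s1 s2 vx by (simp add: abs_le_iff)
qed

theorem theorem1p3:
  fixes \<Omega> :: "(real ^ 'n) set"
    and f :: "real ^ 'n \<Rightarrow> real"
    and g :: "real ^ 'n \<Rightarrow> real"
    and \<epsilon> :: "nat \<Rightarrow> real"
    and u :: "nat \<Rightarrow> real ^ 'n \<Rightarrow> real"
  assumes dom: "open \<Omega>" "connected \<Omega>" "\<Omega> \<noteq> {}"
    and wid: "width \<Omega> < \<infinity>"
    and f_meas: "f \<in> borel_measurable (lebesgue_on \<Omega>)"
    and f_ess_bdd: "\<exists>M. AE x in lebesgue_on \<Omega>. \<bar>f x\<bar> \<le> M"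
    and g_cont: "continuous_on (frontier \<Omega>) g"
    and g_bdd: "bounded (g ` frontier \<Omega>)"
    and eps_pos: "\<And>i. \<epsilon> i > 0"
    and eps_lim: "\<epsilon> \<longlonglongrightarrow> 0"
    and u_bdd: "\<And>i. bounded (u i ` closure \<Omega>)"
    and u_eq: "\<And>i x. x \<in> \<Omega> \<Longrightarrow> eps_inf_lap \<Omega> (\<epsilon> i) (u i) x = (\<epsilon> i)\<^sup>2 * f x"
    and u_bd: "\<And>i x. x \<in> frontier \<Omega> \<Longrightarrow> u i x = g x"
  shows "\<exists>r v. strict_mono r \<and> continuous_on (closure \<Omega>) v \<and>
           (\<forall>K. compact K \<and> K \<subseteq> closure \<Omega> \<longrightarrow>
                 uniform_limit K (\<lambda>k. u (r k)) v sequentially)"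
proof -
  have op: "open \<Omega>" using dom(1) .
  obtain S0 where S0: "\<forall>z\<in>closure \<Omega>. \<bar>u 0 z\<bar> \<le> S0" using u_bdd[of 0] by (auto simp: bounded_real)
  define F where "F = 4 * S0 / (\<epsilon> 0)\<^sup>2"
  have e0: "0 < (\<epsilon> 0)\<^sup>2" using eps_pos[of 0] by simp
  have fb: "\<forall>x\<in>\<Omega>. \<bar>f x\<bar> \<le> F"
  proof
    fix x assume x: "x \<in> \<Omega>"
    have "\<bar>(\<epsilon> 0)\<^sup>2 * f x\<bar> \<le> 4 * S0" using lap_bound[OF x eps_pos[of 0] S0] u_eq[OF x, of 0] by simp
    then have "(\<epsilon> 0)\<^sup>2 * \<bar>f x\<bar> \<le> 4 * S0" by (simp add: abs_mult)
    then show "\<bar>f x\<bar> \<le> F" unfolding F_def using e0 by (simp add: field_simps)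
  qed
  have F0: "0 \<le> F"
  proof -
    obtain x0 where "x0 \<in> \<Omega>" using dom(3) by blast
    then have "\<bar>f x0\<bar> \<le> F" using fb by blast
    then show ?thesis by (meson abs_ge_zero order_trans)
  qed
  have fne: "frontier \<Omega> \<noteq> {}"
  proof
    assume fe: "frontier \<Omega> = {}"
    have "width \<Omega> = (SUP x\<in>\<Omega>. (\<infinity>::ereal))" unfolding width_def fe by (simp add: top_ereal_def)
    also have "\<dots> = \<infinity>" using dom(3) by simp
    finally show False using wid by simp
  qed
  have "width \<Omega> \<noteq> \<infinity>" using wid by simp
  then obtain n :: nat where wn: "width \<Omega> < ereal (real n)" unfolding less_PInf_Ex_of_nat by blast
  define W where "W = real n"
  have W0: "0 \<le> W" by (simp add: W_def)
  have Wb: "\<forall>y\<in>\<Omega>. infdist y (frontier \<Omega>) \<le> W"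
  proof
    fix y assume y: "y \<in> \<Omega>"
    have "ereal (infdist y (frontier \<Omega>)) \<le> (INF q\<in>frontier \<Omega>. intr_dist \<Omega> q y)"
    proof (rule INF_greatest)
      fix q assume q: "q \<in> frontier \<Omega>"
      have "ereal (infdist y (frontier \<Omega>)) \<le> ereal (dist q y)"
        using infdist_le[OF q, of y] by (simp add: dist_commute)
      also have "\<dots> \<le> intr_dist \<Omega> q y" by (rule intr_dist_ge)
      finally show "ereal (infdist y (frontier \<Omega>)) \<le> intr_dist \<Omega> q y" .
    qed
    also have "\<dots> \<le> width \<Omega>" unfolding width_def using y by (rule SUP_upper)
    also have "\<dots> < ereal W" using wn by (simp add: W_def)
    finally show "infdist y (frontier \<Omega>) \<le> W" by simp
  qed
  obtain G where G: "\<forall>q\<in>frontier \<Omega>. \<bar>g q\<bar> \<le> G" using g_bdd by (auto simp: bounded_real)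
  have G0: "0 \<le> G"
  proof -
    obtain q0 where "q0 \<in> frontier \<Omega>" using fne by blast
    then have "\<bar>g q0\<bar> \<le> G" using G by blast
    then show ?thesis by (meson abs_ge_zero order_trans)
  qed
  obtain i0 where i0': "\<forall>i\<ge>i0. \<epsilon> i < 1" using eps_small[OF eps_lim, of 1] by auto
  have i0: "\<forall>i\<ge>i0. \<epsilon> i \<le> 1" using i0' by (simp add: less_imp_le)
  have os: "OS \<Omega> (\<epsilon> i) F (u i) \<and> OS \<Omega> (\<epsilon> i) F (\<lambda>z. - u i z)" for i
    using dpp_OS[OF eps_pos u_bdd _ fb] u_eq by blast
  define S where "S = G + (2*F+2) * (W+2)\<^sup>2 + 4 * (2*F+2) * (W+2) + F"
  have S0': "G \<le> S" unfolding S_def using F0 W0 by simp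
  have uS: "\<forall>i\<ge>i0. \<forall>z\<in>closure \<Omega>. \<bar>u i z\<bar> \<le> S"
  proof (intro allI impI ballI)
    fix i z assume i: "i0 \<le> i" and z: "z \<in> closure \<Omega>"
    have e: "0 < \<epsilon> i" "\<epsilon> i \<le> 1" using eps_pos i0 i by auto
    have vb2: "bounded ((\<lambda>z. - u i z) ` closure \<Omega>)"
      using u_bdd[of i] by (auto simp: bounded_real)
    have g1: "\<forall>q\<in>frontier \<Omega>. u i q \<le> G" using G u_bd by (auto simp: abs_le_iff)
    have g2: "\<forall>q\<in>frontier \<Omega>. - u i q \<le> G" using G u_bd by (auto simp: abs_le_iff)
    have "u i z \<le> S" using global_bound[OF op e F0 _ u_bdd fne Wb W0 g1] os z unfolding S_def by blast
    moreover have "- u i z \<le> S" using global_bound[OF op e F0 _ vb2 fne Wb W0 g2] os z unfolding S_def by blast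
    ultimately show "\<bar>u i z\<bar> \<le> S" by (simp add: abs_le_iff)
  qed
  have Snn: "0 \<le> S" using S0' G0 by simp
  have gS: "\<forall>q\<in>frontier \<Omega>. \<bar>g q\<bar> \<le> S" using G S0' by (meson order_trans)
  have equi: "\<forall>x\<in>closure \<Omega>. \<forall>\<eta>>0. \<exists>\<rho>>0. \<exists>N. \<forall>i\<ge>N. \<forall>y\<in>closure \<Omega>. \<forall>y'\<in>closure \<Omega>.
           dist y x < \<rho> \<longrightarrow> dist y' x < \<rho> \<longrightarrow> \<bar>u i y - u i y'\<bar> \<le> \<eta>"
    using equi_lemma[OF op F0 Snn eps_pos eps_lim i0 _ uS gS g_cont u_bd] os by blast
  show ?thesis using AA[OF uS equi] .
qed

end
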